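(* For every $m\in\mathbb N$, $(\mathcal F_m,l_m)$ is a spherically complete ultrametric space.
   Context: Formulas are built from $\bot$ and atoms by $\to$ and $\Box$; sequents $\Gamma\Rightarrow\Delta$ have finite multisets of formulas on each side, and $\Box\Pi$ denotes $\{\Box B:B\in\Pi\}$. The calculus $\mathsf{Grz}_\infty+\mathsf{cut}$ has initial sequents $\Gamma,p\Rightarrow p,\Delta$ ($p$ atomic), $\Gamma,\bot\Rightarrow\Delta$, and rules $(\to_L)$ from $\Gamma,B\Rightarrow\Delta$ and $\Gamma\Rightarrow A,\Delta$ infer $\Gamma,A\to B\Rightarrow\Delta$; $(\to_R)$ from $\Gamma,A\Rightarrow B,\Delta$ infer $\Gamma\Rightarrow A\to B,\Delta$; $(\mathsf{refl})$ from $\Gamma,B,\Box B\Rightarrow\Delta$ infer $\Gamma,\Box B\Rightarrow\Delta$; $(\Box)$ from left premise $\Gamma,\Box\Pi\Rightarrow A,\Delta$ and right premise $\Box\Pi\Rightarrow A$ infer $\Gamma,\Box\Pi\Rightarrow\Box A,\Delta$; $(\mathsf{cut})$ from $\Gamma\Rightarrow A,\Delta$ and $\Gamma,A\Rightarrow\Delta$ infer $\Gamma\Rightarrow\Delta$. An $\infty$-proof is a possibly infinite tree of sequents built by these rules with leaves labelled by initial sequents, in which every infinite branch passes through a right premise of $(\Box)$ infinitely often. $\mathcal P$ is the set of all $\infty$-proofs. The $n$-fragment of an $\infty$-proof is the finite tree obtained by cutting every branch at the $n$-th (counting from the root) right premise of the rule $(\Box)$; the $1$-fragment is the main fragment, and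 the local height $|\pi|$ is the length of the longest branch in the main fragment of $\pi$ (an $\infty$-proof consisting only of an initial sequent has local height $0$). For $\pi,\tau\in\mathcal P$ write $\pi\sim_n\tau$ if their $n$-fragments coincide; $\pi\sim_0\tau$ always. $\mathcal F_m$ is the set of all functions $\mathsf u:\mathcal P^m\to\mathcal P$ that are non-expansive, i.e. for all tuples $\vec\pi,\vec\pi'$ and $n\in\mathbb N$, if $\pi_i\sim_n\pi'_i$ for all $i\le m$ then $\mathsf u(\vec\pi)\sim_n\mathsf u(\vec\pi')$. For $\mathsf a,\mathsf b\in\mathcal F_m$ write $\mathsf a\sim_{n,k}\mathsf b$ if $\mathsf a(\vec\pi)\sim_n\mathsf b(\vec\pi)$ for all $\vec\pi\in\mathcal P^m$ and moreover $\mathsf a(\vec\pi)\sim_{n+1}\mathsf b(\vec\pi)$ whenever $\sum_{i=1}^m|\pi_i|<k$. Define $l_m(\mathsf a,\mathsf b)=\frac12\inf\{2^{-n}+2^{-n-k}\mid \mathsf a\sim_{n,k}\mathsf b\}$. An ultrametric space is a metric space with $d(x,z)\le\max\{d(x,y),d(y,z)\}$; it is spherically complete if every descending sequence of closed balls $B_r(x)=\{y: d(x,y)\le r\}$ has a common point. *)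

theory Defs
  imports "HOL-Analysis.Analysis" "HOL-Library.Multiset" "HOL-Library.FuncSet"
begin

datatype fm = Bot | At nat | Imp fm fm | Bx fm

type_synonym sequent = "fm multiset \<times> fm multiset"  (* antecedent, succedent *)

datatype rule = AxAt | AxBot | ImpL | ImpR | Refl | BoxR | Cut

fun arity :: "rule \<Rightarrow> nat" where
  "arity AxAt = 0" | "arity AxBot = 0" | "arity ImpL = 2" | "arity ImpR = 1"
| "arity Refl = 1" | "arity BoxR = 2" | "arity Cut = 2"

text \<open>Local correctness of a rule instance: conclusion, premises (in order; for ImpL the
  first premise is Gamma,B => Delta; for BoxR child 0 is the left premise and child 1 the
  right premise; for Cut child 0 is Gamma => A,Delta).\<close>

fun rule_ok :: "rule \<Rightarrow> sequent \<Rightarrow> sequent list \<Rightarrow> bool" where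
  "rule_ok AxAt (G, D) ps = (ps = [] \<and> (\<exists>p. At p \<in># G \<and> At p \<in># D))"
| "rule_ok AxBot (G, D) ps = (ps = [] \<and> Bot \<in># G)"
| "rule_ok ImpL (G, D) ps = (\<exists>G' A B. G = G' + {#Imp A B#} \<and>
      ps = [(G' + {#B#}, D), (G', D + {#A#})])"
| "rule_ok ImpR (G, D) ps = (\<exists>D' A B. D = D' + {#Imp A B#} \<and>
      ps = [(G + {#A#}, D' + {#B#})])"
| "rule_ok Refl (G, D) ps = (\<exists>G' B. G = G' + {#Bx B#} \<and>
      ps = [(G' + {#B#} + {#Bx B#}, D)])"
| "rule_ok BoxR (G, D) ps = (\<exists>G' Pi D' A. G = G' + image_mset Bx Pi \<and> D = D' + {#Bx A#} \<and>
      ps = [(G, D' + {#A#}), (image_mset Bx Pi, {#A#})])"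
| "rule_ok Cut (G, D) ps = (\<exists>A. ps = [(G, D + {#A#}), (G + {#A#}, D)])"

text \<open>A (possibly infinite) tree is given by its nodes, addressed by lists of child indices;
  each node carries a sequent and the rule applied to it.\<close>

type_synonym tree = "nat list \<Rightarrow> (sequent \<times> rule) option"

definition seq_at :: "tree \<Rightarrow> nat list \<Rightarrow> sequent" where
  "seq_at t w = fst (the (t w))"

definition rule_at :: "tree \<Rightarrow> nat list \<Rightarrow> rule" where
  "rule_at t w = snd (the (t w))"

definition right_step :: "tree \<Rightarrow> nat list \<Rightarrow> nat \<Rightarrow> bool" where
  "right_step t v i \<longleftrightarrow> t v \<noteq> None \<and> rule_at t v = BoxR \<and> i = 1"

definition is_inf_proof :: "tree \<Rightarrow> bool" where
  "is_inf_proof t \<longleftrightarrow>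
     t [] \<noteq> None \<and>
     (\<forall>w i. t (w @ [i]) \<noteq> None \<longrightarrow> t w \<noteq> None) \<and>
     (\<forall>w. t w \<noteq> None \<longrightarrow> (\<forall>i. t (w @ [i]) \<noteq> None \<longleftrightarrow> i < arity (rule_at t w))) \<and>
     (\<forall>w. t w \<noteq> None \<longrightarrow>
        rule_ok (rule_at t w) (seq_at t w) (map (\<lambda>i. seq_at t (w @ [i])) [0..<arity (rule_at t w)])) \<and>
     (\<forall>f :: nat \<Rightarrow> nat. (\<forall>k. t (map f [0..<k]) \<noteq> None) \<longrightarrow>
        (\<forall>N. \<exists>k\<ge>N. right_step t (map f [0..<k]) (f k)))"

definition Proofs :: "tree set" where
  "Proofs = {t. is_inf_proof t}"

definition rcount :: "tree \<Rightarrow> nat list \<Rightarrow> nat" where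
  "rcount t w = card {j. j < length w \<and> right_step t (take j w) (w ! j)}"

text \<open>The n-fragment: all nodes reached before passing the n-th right premise of Box, plus
  these n-th right premises themselves as leaves (carrying their sequent only).\<close>
definition fragment :: "nat \<Rightarrow> tree \<Rightarrow> nat list \<Rightarrow> (sequent \<times> rule option) option" where
  "fragment n t w =
     (if t w \<noteq> None \<and> rcount t (butlast w) < n
      then Some (seq_at t w, if rcount t w < n then Some (rule_at t w) else None)
      else None)"

definition loc_height :: "tree \<Rightarrow> nat" where
  "loc_height t = Max {length w | w. fragment 1 t w \<noteq> None}"

definition sim :: "nat \<Rightarrow> tree \<Rightarrow> tree \<Rightarrow> bool" where
  "sim n p q \<longleftrightarrow> fragment n p = fragment n q"
  (* for n = 0 both fragments are empty, so sim 0 holds always *)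

definition Tuples :: "nat \<Rightarrow> tree list set" where
  "Tuples m = {ps. length ps = m \<and> set ps \<subseteq> Proofs}"

definition Fm :: "nat \<Rightarrow> (tree list \<Rightarrow> tree) set" where
  "Fm m = {u. u \<in> extensional (Tuples m) \<and> (\<forall>ps\<in>Tuples m. u ps \<in> Proofs) \<and>
             (\<forall>ps\<in>Tuples m. \<forall>qs\<in>Tuples m. \<forall>n.
                (\<forall>i<m. sim n (ps ! i) (qs ! i)) \<longrightarrow> sim n (u ps) (u qs))}"

definition sim_nk :: "nat \<Rightarrow> nat \<Rightarrow> nat \<Rightarrow> (tree list \<Rightarrow> tree) \<Rightarrow> (tree list \<Rightarrow> tree) \<Rightarrow> bool" where
  "sim_nk m n k a b \<longleftrightarrow>
     (\<forall>ps\<in>Tuples m. sim n (a ps) (b ps)) \<and>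
     (\<forall>ps\<in>Tuples m. sum_list (map loc_height ps) < k \<longrightarrow> sim (Suc n) (a ps) (b ps))"

definition lm :: "nat \<Rightarrow> (tree list \<Rightarrow> tree) \<Rightarrow> (tree list \<Rightarrow> tree) \<Rightarrow> real" where
  "lm m a b = 1/2 * Inf {(1/2::real) ^ n + (1/2) ^ (n + k) | n k. sim_nk m n k a b}"

definition ultrametric_space :: "'a set \<Rightarrow> ('a \<Rightarrow> 'a \<Rightarrow> real) \<Rightarrow> bool" where
  "ultrametric_space M d \<longleftrightarrow> Metric_space M d \<and>
     (\<forall>x\<in>M. \<forall>y\<in>M. \<forall>z\<in>M. d x z \<le> max (d x y) (d y z))"

definition closed_ball_in :: "'a set \<Rightarrow> ('a \<Rightarrow> 'a \<Rightarrow> real) \<Rightarrow> 'a \<Rightarrow> real \<Rightarrow> 'a set" where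
  "closed_ball_in M d x r = {y\<in>M. d x y \<le> r}"

definition spherically_complete :: "'a set \<Rightarrow> ('a \<Rightarrow> 'a \<Rightarrow> real) \<Rightarrow> bool" where
  "spherically_complete M d \<longleftrightarrow>
     (\<forall>(x :: nat \<Rightarrow> 'a) (r :: nat \<Rightarrow> real).
        (\<forall>k. x k \<in> M \<and> 0 \<le> r k) \<and>
        (\<forall>k. closed_ball_in M d (x (Suc k)) (r (Suc k)) \<subseteq> closed_ball_in M d (x k) (r k))
        \<longrightarrow> (\<exists>y. \<forall>k. y \<in> closed_ball_in M d (x k) (r k)))"

end

theory Submission
  imports Defs
begin


lemma rcount_le: "rcount t w \<le> length w"
proof -
  have "{j. j < length w \<and> right_step t (take j w) (w ! j)} \<subseteq> {..<length w}" by auto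
  then show ?thesis unfolding rcount_def using card_mono[of "{..<length w}"] by fastforce
qed

lemma fragment_short:
  assumes "length w < n"
  shows "fragment n t w = map_option (\<lambda>(s,r). (s, Some r)) (t w)"
proof -
  have "rcount t (butlast w) < n" using rcount_le[of t "butlast w"] assms by auto
  moreover have "rcount t w < n" using rcount_le[of t w] assms by auto
  ultimately show ?thesis unfolding fragment_def seq_at_def rule_at_def
    by (cases "t w") auto
qed

lemma sim_short: "sim n p q \<Longrightarrow> length w < n \<Longrightarrow> p w = q w"
proof -
  assume "sim n p q" "length w < n"
  then have "map_option (\<lambda>(s,r). (s, Some r)) (p w) = map_option (\<lambda>(s,r). (s, Some r)) (q w)"
    unfolding sim_def using fragment_short by metis
  then show "p w = q w" by (cases "p w"; cases "q w") auto
qed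

lemma sim_all_eq: assumes "\<forall>n. sim n p q" shows "p = q"
proof
  fix w :: "nat list"
  have "sim (Suc (length w)) p q" using assms by blast
  then show "p w = q w" using sim_short by blast
qed

lemma sim_0[simp]: "sim 0 p q"
  unfolding sim_def fragment_def by auto

lemma sim_refl[simp]: "sim n p p" unfolding sim_def by simp
lemma sim_sym: "sim n p q \<Longrightarrow> sim n q p" unfolding sim_def by simp
lemma sim_trans: "sim n p q \<Longrightarrow> sim n q r \<Longrightarrow> sim n p r" unfolding sim_def by simp

lemma rcount_cong:
  assumes "\<forall>j<length w. t (take j w) = t' (take j w)"
  shows "rcount t w = rcount t' w"
proof -
  have "{j. j < length w \<and> right_step t (take j w) (w ! j)} = {j. j < length w \<and> right_step t' (take j w) (w ! j)}"
    using assms unfolding right_step_def rule_at_def by auto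
  then show ?thesis unfolding rcount_def by simp
qed

lemma fragment_cong:
  assumes "\<forall>j\<le>length w. t (take j w) = t' (take j w)"
  shows "fragment n t w = fragment n t' w"
proof -
  have w: "t w = t' w" using assms[rule_format, of "length w"] by simp
  have "rcount t w = rcount t' w" using assms by (intro rcount_cong) auto
  moreover have "rcount t (butlast w) = rcount t' (butlast w)"
    using assms by (intro rcount_cong) (auto simp: butlast_conv_take min_def)
  ultimately show ?thesis unfolding fragment_def seq_at_def rule_at_def using w by simp
qed

lemma rcount_take_mono: "rcount t (take j w) \<le> rcount t w"
proof -
  have "{i. i < length (take j w) \<and> right_step t (take i (take j w)) (take j w ! i)}
     \<subseteq> {i. i < length w \<and> right_step t (take i w) (w ! i)}"
    by (auto simp: min_def)
  then show ?thesis unfolding rcount_def by (intro card_mono) auto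
qed

lemma proof_prefix_aux: "is_inf_proof t \<Longrightarrow> t (u @ v) \<noteq> None \<Longrightarrow> t u \<noteq> None"
proof (induction v rule: rev_induct)
  case Nil then show ?case by simp
next
  case (snoc x xs)
  have "\<forall>w i. t (w @ [i]) \<noteq> None \<longrightarrow> t w \<noteq> None"
    using snoc.prems(1) unfolding is_inf_proof_def by blast
  then have "t (u @ xs) \<noteq> None" using snoc.prems(2) by (metis append_assoc)
  then show ?case using snoc.IH snoc.prems(1) by blast
qed

lemma proof_prefix: "is_inf_proof t \<Longrightarrow> t w \<noteq> None \<Longrightarrow> t (take j w) \<noteq> None"
  using proof_prefix_aux[of t "take j w" "drop j w"] by simp



lemma rcount_cong2:
  assumes "\<forall>j<length w. right_step t (take j w) (w ! j) = right_step t' (take j w) (w ! j)"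
  shows "rcount t w = rcount t' w"
proof -
  have "{j. j < length w \<and> right_step t (take j w) (w ! j)} = {j. j < length w \<and> right_step t' (take j w) (w ! j)}"
    using assms by auto
  then show ?thesis unfolding rcount_def by simp
qed

lemma fragment_Some_full:
  assumes "t v \<noteq> None" "rcount t v < n"
  shows "fragment n t v = Some (seq_at t v, Some (rule_at t v))"
proof -
  have "rcount t (butlast v) \<le> rcount t v"
    using rcount_take_mono[of t "length v - 1" v] by (simp add: butlast_conv_take)
  then show ?thesis using assms unfolding fragment_def by auto
qed

lemma fragment_eq_Some_full:
  assumes "fragment n q v = Some (s, Some r)"
  shows "q v \<noteq> None \<and> rcount q v < n \<and> rule_at q v = r \<and> seq_at q v = s"
  using assms unfolding fragment_def by (auto split: if_splits)

lemma sim_prefix_rules: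
  assumes "is_inf_proof p" "sim n p q" "p w \<noteq> None" "rcount p (butlast w) < n" "j < length w"
  shows "q (take j w) \<noteq> None \<and> rule_at q (take j w) = rule_at p (take j w)"
proof -
  let ?v = "take j w"
  have pv: "p ?v \<noteq> None" using proof_prefix assms(1,3) by blast
  have jj: "j \<le> length w - 1" using assms(5) by simp
  have "?v = take j (butlast w)" using jj by (simp add: butlast_conv_take take_take min_absorb1)
  then have "rcount p ?v \<le> rcount p (butlast w)" using rcount_take_mono by metis
  then have "rcount p ?v < n" using assms(4) by simp
  then have "fragment n p ?v = Some (seq_at p ?v, Some (rule_at p ?v))"
    using fragment_Some_full pv by blast
  then have "fragment n q ?v = Some (seq_at p ?v, Some (rule_at p ?v))"
    using assms(2) unfolding sim_def by simp
  then show ?thesis using fragment_eq_Some_full by blast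
qed

lemma sim_rcounts:
  assumes "is_inf_proof p" "sim n p q" "p w \<noteq> None" "rcount p (butlast w) < n"
  shows "rcount q w = rcount p w" "rcount q (butlast w) = rcount p (butlast w)"
proof -
  have rs: "right_step q (take j w) i = right_step p (take j w) i" if "j < length w" for j i
    using sim_prefix_rules[OF assms that] proof_prefix[OF assms(1,3)] unfolding right_step_def by auto
  show "rcount q w = rcount p w" using rs by (intro rcount_cong2) auto
  show "rcount q (butlast w) = rcount p (butlast w)"
    using rs by (intro rcount_cong2) (auto simp: butlast_conv_take min_def nth_take)
qed

lemma sim_down_aux:
  assumes "is_inf_proof p" "sim n p q" "n' \<le> n" "p w \<noteq> None" "rcount p (butlast w) < n'"
  shows "fragment n' p w = fragment n' q w"
proof -
  have lt: "rcount p (butlast w) < n" using assms by simp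
  note rc = sim_rcounts[OF assms(1,2,4) lt]
  have fp: "fragment n p w = Some (seq_at p w, if rcount p w < n then Some (rule_at p w) else None)"
    using assms(4) lt unfolding fragment_def by simp
  then have fq: "fragment n q w = Some (seq_at p w, if rcount p w < n then Some (rule_at p w) else None)"
    using assms(2) unfolding sim_def by simp
  then have qw: "q w \<noteq> None" "seq_at q w = seq_at p w" unfolding fragment_def by (auto split: if_splits)
  have rr: "rule_at q w = rule_at p w" if "rcount p w < n"
    using fq that rc unfolding fragment_def by (auto split: if_splits)
  have e1: "fragment n' p w = Some (seq_at p w, if rcount p w < n' then Some (rule_at p w) else None)"
    using assms(4,5) unfolding fragment_def by simp
  have e2: "fragment n' q w = Some (seq_at q w, if rcount q w < n' then Some (rule_at q w) else None)"
    using qw(1) rc(2) assms(5) unfolding fragment_def by simp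
  show ?thesis
  proof (cases "rcount p w < n'")
    case True
    then have "rcount p w < n" using assms(3) by simp
    then show ?thesis using e1 e2 rc(1) qw(2) rr True by simp
  next
    case False
    then show ?thesis using e1 e2 rc(1) qw(2) by simp
  qed
qed

lemma sim_down:
  assumes "is_inf_proof p" "is_inf_proof q" "sim n p q" "n' \<le> n"
  shows "sim n' p q"
  unfolding sim_def
proof
  fix w
  show "fragment n' p w = fragment n' q w"
  proof (cases "p w \<noteq> None \<and> rcount p (butlast w) < n'")
    case True then show ?thesis using sim_down_aux assms by blast
  next
    case F1: False
    show ?thesis
    proof (cases "q w \<noteq> None \<and> rcount q (butlast w) < n'")
      case True then show ?thesis using sim_down_aux[OF assms(2) sim_sym[OF assms(3)] assms(4)] by metis
    next
      case False then show ?thesis using F1 unfolding fragment_def by auto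
    qed
  qed
qed

lemma loc_height_sim:
  assumes "is_inf_proof p" "is_inf_proof q" "sim n p q" "0 < n"
  shows "loc_height p = loc_height q"
proof -
  have "sim 1 p q" using sim_down assms by simp
  then show ?thesis unfolding loc_height_def sim_def by simp
qed



lemma ip1: "is_inf_proof t \<Longrightarrow> t [] \<noteq> None"
  unfolding is_inf_proof_def by blast
lemma ip2: "is_inf_proof t \<Longrightarrow> t (w @ [i]) \<noteq> None \<Longrightarrow> t w \<noteq> None"
  unfolding is_inf_proof_def by blast
lemma ip3: "is_inf_proof t \<Longrightarrow> t w \<noteq> None \<Longrightarrow> (t (w @ [i]) \<noteq> None) = (i < arity (rule_at t w))"
  unfolding is_inf_proof_def by blast
lemma ip4: "is_inf_proof t \<Longrightarrow> t w \<noteq> None \<Longrightarrow>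
   rule_ok (rule_at t w) (seq_at t w) (map (\<lambda>i. seq_at t (w @ [i])) [0..<arity (rule_at t w)])"
  unfolding is_inf_proof_def by blast
lemma ip5: "is_inf_proof t \<Longrightarrow> (\<forall>k. t (map f [0..<k]) \<noteq> None) \<Longrightarrow> \<exists>k\<ge>N. right_step t (map f [0..<k]) (f k)"
  unfolding is_inf_proof_def by blast

lemma ipI:
  assumes "t [] \<noteq> None"
    "\<And>w i. t (w @ [i]) \<noteq> None \<Longrightarrow> t w \<noteq> None"
    "\<And>w i. t w \<noteq> None \<Longrightarrow> (t (w @ [i]) \<noteq> None) = (i < arity (rule_at t w))"
    "\<And>w. t w \<noteq> None \<Longrightarrow> rule_ok (rule_at t w) (seq_at t w) (map (\<lambda>i. seq_at t (w @ [i])) [0..<arity (rule_at t w)])"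
    "\<And>f N. (\<forall>k. t (map f [0..<k]) \<noteq> None) \<Longrightarrow> \<exists>k\<ge>N. right_step t (map f [0..<k]) (f k)"
  shows "is_inf_proof t"
  unfolding is_inf_proof_def using assms by blast

lemma lim_exists:
  fixes t :: "nat \<Rightarrow> tree"
  assumes P: "\<And>j. is_inf_proof (t j)"
  and C: "\<forall>n. \<exists>J. \<forall>j l. J \<le> j \<longrightarrow> j \<le> l \<longrightarrow> sim n (t j) (t l)"
  shows "\<exists>y. is_inf_proof y \<and> (\<forall>n. \<exists>J. \<forall>j\<ge>J. sim n (t j) y)"
proof -
  obtain J :: "nat \<Rightarrow> nat" where J: "\<And>n j l. J n \<le> j \<Longrightarrow> j \<le> l \<Longrightarrow> sim n (t j) (t l)"
    using C by metis
  define M where "M n = (\<Sum>i\<le>n. J i)" for n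
  have Mmono: "M n \<le> M n'" if "n \<le> n'" for n n'
    unfolding M_def using that by (intro sum_mono2) auto
  have MJ: "J n \<le> M n" for n
    unfolding M_def by (rule member_le_sum) auto
  have MS: "sim n (t (M n)) (t j)" if "M n \<le> j" for n j
    using J MJ that by blast
  define y where "y w = t (M (Suc (length w))) w" for w
  have yA: "y w = t l w" if "M (Suc (length w)) \<le> l" for w l
    using MS[OF that] sim_short unfolding y_def by blast
  have yB: "sim n (t (M n)) y" for n
    unfolding sim_def
  proof
    fix w :: "nat list"
    let ?L = "max (M n) (M (Suc (length w)))"
    have "\<forall>j\<le>length w. y (take j w) = t ?L (take j w)"
    proof (intro allI impI)
      fix j assume "j \<le> length w"
      then have "M (Suc (length (take j w))) \<le> M (Suc (length w))" by (intro Mmono) auto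
      then show "y (take j w) = t ?L (take j w)" by (intro yA) auto
    qed
    then have "fragment n y w = fragment n (t ?L) w" by (rule fragment_cong)
    moreover have "sim n (t (M n)) (t ?L)" by (intro MS) auto
    ultimately show "fragment n (t (M n)) w = fragment n y w" unfolding sim_def by simp
  qed
  have yC: "\<forall>j\<ge>M n. sim n (t j) y" for n
    using yB MS sim_sym sim_trans by blast
  have yD: "y v = t (M (Suc (Suc (length w)))) v" if "length v \<le> Suc (length w)" for v w
    using that by (intro yA Mmono) auto
  have "is_inf_proof y"
  proof (rule ipI)
    show "y [] \<noteq> None" unfolding y_def using ip1 P by blast
  next
    fix w i assume a: "y (w @ [i]) \<noteq> None"
    let ?L = "M (Suc (Suc (length w)))"
    have "y (w @ [i]) = t ?L (w @ [i])" "y w = t ?L w" using yD[of _ w] by auto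
    then show "y w \<noteq> None" using a ip2 P by metis
  next
    fix w i assume a: "y w \<noteq> None"
    let ?L = "M (Suc (Suc (length w)))"
    have e: "y (w @ [i]) = t ?L (w @ [i])" "y w = t ?L w" using yD[of _ w] by auto
    then have "rule_at y w = rule_at (t ?L) w" unfolding rule_at_def by simp
    then show "(y (w @ [i]) \<noteq> None) = (i < arity (rule_at y w))"
      using e ip3[OF P, of ?L w i] a by simp
  next
    fix w assume a: "y w \<noteq> None"
    let ?L = "M (Suc (Suc (length w)))"
    have e: "\<And>i. y (w @ [i]) = t ?L (w @ [i])" "y w = t ?L w" using yD[of _ w] by auto
    then have "rule_at y w = rule_at (t ?L) w" "seq_at y w = seq_at (t ?L) w"
       "\<And>i. seq_at y (w @ [i]) = seq_at (t ?L) (w @ [i])"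
      unfolding rule_at_def seq_at_def by simp_all
    then show "rule_ok (rule_at y w) (seq_at y w) (map (\<lambda>i. seq_at y (w @ [i])) [0..<arity (rule_at y w)])"
      using e ip4[OF P, of ?L w] a by simp
  next
    fix f N assume br: "\<forall>k. y (map f [0..<k]) \<noteq> None"
    show "\<exists>k\<ge>N. right_step y (map f [0..<k]) (f k)"
    proof (rule ccontr)
      assume nr: "\<not> (\<exists>k\<ge>N. right_step y (map f [0..<k]) (f k))"
      let ?n = "Suc N"
      let ?L = "M ?n"
      have rc: "rcount y (map f [0..<k]) \<le> N" for k
      proof -
        have "{j. j < length (map f [0..<k]) \<and> right_step y (take j (map f [0..<k])) (map f [0..<k] ! j)} \<subseteq> {..<N}"
        proof
          fix j assume "j \<in> {j. j < length (map f [0..<k]) \<and> right_step y (take j (map f [0..<k])) (map f [0..<k] ! j)}"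
          then have "j < k" "right_step y (map f [0..<j]) (f j)" by (auto simp: take_map)
          then show "j \<in> {..<N}" using nr by (meson lessThan_iff not_le)
        qed
        then show ?thesis unfolding rcount_def by (metis card_lessThan card_mono finite_lessThan)
      qed
      have tr: "t ?L (map f [0..<k]) \<noteq> None \<and> rule_at (t ?L) (map f [0..<k]) = rule_at y (map f [0..<k])" for k
      proof -
        have "rcount y (map f [0..<k]) < ?n" using rc[of k] by simp
        then have "fragment ?n y (map f [0..<k]) = Some (seq_at y (map f [0..<k]), Some (rule_at y (map f [0..<k])))"
          using fragment_Some_full br by blast
        then have "fragment ?n (t ?L) (map f [0..<k]) = Some (seq_at y (map f [0..<k]), Some (rule_at y (map f [0..<k])))"
          using yB[of ?n] unfolding sim_def by simp
        then show ?thesis using fragment_eq_Some_full by blast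
      qed
      then obtain k where "k \<ge> N" "right_step (t ?L) (map f [0..<k]) (f k)"
        using ip5[OF P, of ?L f N] by blast
      then have "right_step y (map f [0..<k]) (f k)" using tr br unfolding right_step_def by simp
      then show False using nr \<open>k \<ge> N\<close> by blast
    qed
  qed
  then show ?thesis using yC by blast
qed



definition vv :: "nat \<Rightarrow> nat \<Rightarrow> real" where
  "vv n k = (1/2)^n + (1/2)^(n+k)"

definition SS :: "nat \<Rightarrow> (tree list \<Rightarrow> tree) \<Rightarrow> (tree list \<Rightarrow> tree) \<Rightarrow> real set" where
  "SS m a b = {vv n k | n k. sim_nk m n k a b}"

lemma lm_alt: "lm m a b = 1/2 * Inf (SS m a b)"
  unfolding lm_def SS_def vv_def by simp

lemma vv_pos: "0 < vv n k" unfolding vv_def by (intro add_pos_pos) simp_all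

lemma vv_n0: "vv n 0 = 2 * (1/2)^n" unfolding vv_def by simp

lemma vv_lt1: assumes "n < n'" shows "vv n' k' < vv n k"
proof -
  have "vv n' k' \<le> 2 * (1/2)^n'" unfolding vv_def
    by (simp add: power_add mult_left_le_one_le power_le_one)
  also have "(1/2::real)^n' \<le> (1/2)^(Suc n)" using assms by (intro power_decreasing) auto
  then have "2 * (1/2::real)^n' \<le> (1/2)^n" by simp
  also have "(1/2::real)^n < vv n k" unfolding vv_def by simp
  finally show ?thesis by simp
qed

lemma vv_lt2: assumes "k < k'" shows "vv n k' < vv n k"
proof -
  have "(1/2::real)^(n+k') < (1/2)^(n+k)" using assms by (intro power_strict_decreasing) auto
  then show ?thesis unfolding vv_def by simp
qed

lemma vv_le_iff: "vv n k \<le> vv n' k' \<longleftrightarrow> (n' < n \<or> (n' = n \<and> k' \<le> k))"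
proof (cases n n' rule: linorder_cases)
  case less then show ?thesis using vv_lt1[OF less, of k' k] by auto
next
  case greater then show ?thesis using vv_lt1[OF greater, of k k'] by auto
next
  case equal
  then show ?thesis
  proof (cases k k' rule: linorder_cases)
    case less then show ?thesis using vv_lt2[OF less, of n] equal by auto
  next
    case greater then show ?thesis using vv_lt2[OF greater, of n] equal by auto
  qed (simp add: equal)
qed

lemma sim_nk_00: "sim_nk m 0 0 a b"
  unfolding sim_nk_def by simp

lemma SS_ne: "SS m a b \<noteq> {}"
  unfolding SS_def using sim_nk_00 by blast

lemma SS_bdd: "bdd_below (SS m a b)"
  unfolding SS_def bdd_below_def using vv_pos by (auto intro!: exI[of _ 0] less_imp_le)

lemma lm_upper: "sim_nk m n k a b \<Longrightarrow> lm m a b \<le> vv n k / 2"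
  unfolding lm_alt using cInf_lower[OF _ SS_bdd, of "vv n k" m a b] unfolding SS_def by auto

lemma lm_nonneg: "0 \<le> lm m a b"
proof -
  have "0 \<le> Inf (SS m a b)"
    using SS_ne by (rule cInf_greatest) (auto simp: SS_def vv_pos less_imp_le)
  then show ?thesis unfolding lm_alt by simp
qed

lemma lm_sym: "lm m a b = lm m b a"
proof -
  have "sim_nk m n k a b = sim_nk m n k b a" for n k
    unfolding sim_nk_def using sim_sym by blast
  then show ?thesis unfolding lm_def by simp
qed

lemma Fm_proof: "u \<in> Fm m \<Longrightarrow> ps \<in> Tuples m \<Longrightarrow> is_inf_proof (u ps)"
  unfolding Fm_def Proofs_def by blast

lemma Fm_ne: "u \<in> Fm m \<Longrightarrow> ps \<in> Tuples m \<Longrightarrow> qs \<in> Tuples m \<Longrightarrow> (\<forall>i<m. sim n (ps ! i) (qs ! i)) \<Longrightarrow> sim n (u ps) (u qs)"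
  unfolding Fm_def by blast

lemma Fm_ext: "u \<in> Fm m \<Longrightarrow> u \<in> extensional (Tuples m)"
  unfolding Fm_def by blast

lemma sim_nk_mono:
  assumes "a \<in> Fm m" "b \<in> Fm m" "sim_nk m n k a b" "vv n k \<le> vv n' k'"
  shows "sim_nk m n' k' a b"
proof -
  have c: "n' < n \<or> (n' = n \<and> k' \<le> k)" using assms(4) vv_le_iff by blast
  show ?thesis unfolding sim_nk_def
  proof (intro conjI ballI impI)
    fix ps assume ps: "ps \<in> Tuples m"
    have pa: "is_inf_proof (a ps)" "is_inf_proof (b ps)" using Fm_proof assms ps by auto
    have s: "sim n (a ps) (b ps)" using assms(3) ps unfolding sim_nk_def by blast
    show "sim n' (a ps) (b ps)" using c sim_down[OF pa s] by auto
    assume h: "sum_list (map loc_height ps) < k'"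
    show "sim (Suc n') (a ps) (b ps)"
    proof (cases "n' < n")
      case True then show ?thesis using sim_down[OF pa s] by auto
    next
      case False then have "n' = n" "k' \<le> k" using c by auto
      then show ?thesis using assms(3) ps h unfolding sim_nk_def by auto
    qed
  qed
qed

lemma sim_nk_trans: "sim_nk m n k a b \<Longrightarrow> sim_nk m n k b c \<Longrightarrow> sim_nk m n k a c"
  unfolding sim_nk_def using sim_trans by blast

lemma lm_self: "lm m a a = 0"
proof -
  have all: "sim_nk m n k a a" for n k unfolding sim_nk_def by simp
  have "Inf (SS m a a) \<le> 0"
  proof (rule ccontr)
    assume "\<not> Inf (SS m a a) \<le> 0"
    then have pos: "0 < Inf (SS m a a) / 2" by simp
    obtain n where n: "(1/2::real)^n < Inf (SS m a a) / 2"
      using real_arch_pow_inv[OF pos, of "1/2"] by auto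
    have "Inf (SS m a a) \<le> vv n 0"
      using cInf_lower[OF _ SS_bdd, of "vv n 0" m a a] all unfolding SS_def by auto
    then show False using n vv_n0[of n] by simp
  qed
  then show ?thesis using lm_nonneg[of m a a] unfolding lm_alt by simp
qed

lemma lm_attain:
  assumes a: "a \<in> Fm m" and b: "b \<in> Fm m" and ne: "a \<noteq> b"
  shows "\<exists>n k. sim_nk m n k a b \<and> lm m a b = vv n k / 2"
proof -
  obtain ps where ps: "ps \<in> Tuples m" "a ps \<noteq> b ps"
    using ne extensionalityI[OF Fm_ext[OF a] Fm_ext[OF b]] by blast
  have pa: "is_inf_proof (a ps)" "is_inf_proof (b ps)" using Fm_proof a b ps by auto
  obtain N where N: "\<not> sim N (a ps) (b ps)" using sim_all_eq ps(2) by blast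
  define A where "A = {n. \<exists>k. sim_nk m n k a b}"
  have AN: "A \<subseteq> {..<N}"
  proof
    fix n assume "n \<in> A"
    then obtain k where "sim_nk m n k a b" unfolding A_def by blast
    then have "sim n (a ps) (b ps)" using ps unfolding sim_nk_def by blast
    then show "n \<in> {..<N}" using N sim_down[OF pa] by (meson lessThan_iff not_le)
  qed
  have finA: "finite A" using AN finite_subset by blast
  have A0: "0 \<in> A" unfolding A_def using sim_nk_00 by blast
  define n0 where "n0 = Max A"
  have n0A: "n0 \<in> A" unfolding n0_def using finA A0 Max_in by blast
  have n0max: "n \<le> n0" if "n \<in> A" for n unfolding n0_def using finA that by simp
  have "\<not> (\<forall>k. sim_nk m n0 k a b)"
  proof
    assume allk: "\<forall>k. sim_nk m n0 k a b"
    have "sim_nk m (Suc n0) 0 a b" unfolding sim_nk_def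
    proof (intro conjI ballI impI)
      fix ps assume ps: "ps \<in> Tuples m"
      have "sim_nk m n0 (Suc (sum_list (map loc_height ps))) a b" using allk by blast
      then show "sim (Suc n0) (a ps) (b ps)" using ps unfolding sim_nk_def by auto
    qed simp
    then have "Suc n0 \<in> A" unfolding A_def by blast
    then show False using n0max by fastforce
  qed
  then obtain K where K: "\<not> sim_nk m n0 K a b" by blast
  define B where "B = {k. sim_nk m n0 k a b}"
  have BK: "B \<subseteq> {..<K}"
  proof
    fix k assume "k \<in> B"
    then have "sim_nk m n0 k a b" unfolding B_def by blast
    then show "k \<in> {..<K}" using K sim_nk_mono[OF a b] vv_le_iff
      by (metis lessThan_iff not_le)
  qed
  have finB: "finite B" using BK finite_subset by blast
  have B0: "B \<noteq> {}" using n0A unfolding A_def B_def by blast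
  define k0 where "k0 = Max B"
  have k0B: "k0 \<in> B" unfolding k0_def using finB B0 Max_in by blast
  have k0max: "k \<le> k0" if "k \<in> B" for k unfolding k0_def using finB that by simp
  have adm: "sim_nk m n0 k0 a b" using k0B unfolding B_def by blast
  have low: "vv n0 k0 \<le> x" if xS: "x \<in> SS m a b" for x
  proof -
    obtain n k where x: "x = vv n k" "sim_nk m n k a b" using xS unfolding SS_def by blast
    have "n \<le> n0" using n0max x(2) unfolding A_def by blast
    moreover have "n = n0 \<Longrightarrow> k \<le> k0" using k0max x(2) unfolding B_def by blast
    ultimately show ?thesis using x(1) vv_le_iff by (metis le_neq_implies_less)
  qed
  have "Inf (SS m a b) = vv n0 k0"
  proof (rule antisym)
    show "Inf (SS m a b) \<le> vv n0 k0"
      using cInf_lower[OF _ SS_bdd, of "vv n0 k0" m a b] adm unfolding SS_def by auto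
    show "vv n0 k0 \<le> Inf (SS m a b)" using SS_ne low by (rule cInf_greatest)
  qed
  then show ?thesis using adm unfolding lm_alt by auto
qed

lemma lm_zero_iff: "a \<in> Fm m \<Longrightarrow> b \<in> Fm m \<Longrightarrow> lm m a b = 0 \<longleftrightarrow> a = b"
proof (cases "a = b")
  case True then show ?thesis using lm_self by simp
next
  case False
  assume a: "a \<in> Fm m" "b \<in> Fm m"
  obtain n k where "lm m a b = vv n k / 2" using lm_attain[OF a False] by blast
  then have "lm m a b > 0" using vv_pos[of n k] by simp
  then show ?thesis using False by simp
qed

lemma lm_le_attain:
  assumes a: "a \<in> Fm m" and b: "b \<in> Fm m" and s: "0 < s" "lm m a b \<le> s"
  shows "\<exists>n k. sim_nk m n k a b \<and> vv n k \<le> 2 * s"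
proof (cases "a = b")
  case True
  obtain n where n: "(1/2::real)^n < s" using real_arch_pow_inv[OF s(1), of "1/2"] by auto
  have "sim_nk m n 0 a b" unfolding sim_nk_def True by simp
  then show ?thesis using n vv_n0[of n] by (intro exI[of _ n] exI[of _ 0]) simp
next
  case False
  then show ?thesis using lm_attain[OF a b] s by fastforce
qed

lemma lm_ultra:
  assumes a: "a \<in> Fm m" and b: "b \<in> Fm m" and c: "c \<in> Fm m"
  shows "lm m a c \<le> max (lm m a b) (lm m b c)"
proof (cases "a = b \<or> b = c")
  case True then show ?thesis using lm_self by auto
next
  case False
  then obtain n1 k1 n2 k2 where 1: "sim_nk m n1 k1 a b" "lm m a b = vv n1 k1 / 2"
    and 2: "sim_nk m n2 k2 b c" "lm m b c = vv n2 k2 / 2"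
    using lm_attain[OF a b] lm_attain[OF b c] by metis
  show ?thesis
  proof (cases "vv n2 k2 \<le> vv n1 k1")
    case True
    then have "sim_nk m n1 k1 b c" using sim_nk_mono[OF b c 2(1)] by blast
    then have "sim_nk m n1 k1 a c" using 1(1) sim_nk_trans by blast
    then show ?thesis using lm_upper 1(2) by fastforce
  next
    case False
    then have "sim_nk m n2 k2 a b" using sim_nk_mono[OF a b 1(1)] by simp
    then have "sim_nk m n2 k2 a c" using 2(1) sim_nk_trans by blast
    then show ?thesis using lm_upper 2(2) by fastforce
  qed
qed

lemma ultra_part: "ultrametric_space (Fm m) (lm m)"
  unfolding ultrametric_space_def
proof (intro conjI ballI)
  show "Metric_space (Fm m) (lm m)"
  proof
    show "0 \<le> lm m x y" for x y by (rule lm_nonneg)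
    show "lm m x y = lm m y x" for x y by (rule lm_sym)
    show "x \<in> Fm m \<Longrightarrow> y \<in> Fm m \<Longrightarrow> (lm m x y = 0) = (x = y)" for x y by (rule lm_zero_iff)
    show "lm m x z \<le> lm m x y + lm m y z" if "x \<in> Fm m" "y \<in> Fm m" "z \<in> Fm m" for x y z
      using lm_ultra[OF that] lm_nonneg[of m x y] lm_nonneg[of m y z] by linarith
  qed
  show "lm m x z \<le> max (lm m x y) (lm m y z)" if "x \<in> Fm m" "y \<in> Fm m" "z \<in> Fm m" for x y z
    using lm_ultra[OF that] .
qed



lemma tuples_proof: "ps \<in> Tuples m \<Longrightarrow> i < m \<Longrightarrow> is_inf_proof (ps ! i)"
  unfolding Tuples_def Proofs_def using nth_mem by fastforce

lemma h_sim:
  assumes "ps \<in> Tuples m" "qs \<in> Tuples m" "\<forall>i<m. sim n (ps ! i) (qs ! i)" "0 < n"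
  shows "sum_list (map loc_height ps) = sum_list (map loc_height qs)"
proof -
  have l: "length ps = m" "length qs = m" using assms unfolding Tuples_def by auto
  have "map loc_height ps = map loc_height qs"
  proof (rule nth_equalityI)
    show "length (map loc_height ps) = length (map loc_height qs)" using l by simp
    fix i assume "i < length (map loc_height ps)"
    then have i: "i < m" using l by simp
    show "map loc_height ps ! i = map loc_height qs ! i"
      using loc_height_sim[OF tuples_proof[OF assms(1) i] tuples_proof[OF assms(2) i] assms(3)[rule_format, OF i] assms(4)] l i by simp
  qed
  then show ?thesis by simp
qed

theorem sph: "spherically_complete (Fm m) (lm m)"
  unfolding spherically_complete_def
proof (intro allI impI)
  fix x :: "nat \<Rightarrow> tree list \<Rightarrow> tree" and r :: "nat \<Rightarrow> real"
  assume H: "(\<forall>k. x k \<in> Fm m \<and> 0 \<le> r k) \<and>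
       (\<forall>k. closed_ball_in (Fm m) (lm m) (x (Suc k)) (r (Suc k)) \<subseteq> closed_ball_in (Fm m) (lm m) (x k) (r k))"
  define Bl where "Bl k = closed_ball_in (Fm m) (lm m) (x k) (r k)" for k
  have xF: "x k \<in> Fm m" for k using H by blast
  have r0: "0 \<le> r k" for k using H by blast
  have inB: "x k \<in> Bl k" for k unfolding Bl_def closed_ball_in_def using xF r0 lm_self by simp
  have "decseq Bl" unfolding Bl_def using H by (intro decseq_SucI) blast
  then have dec: "k \<le> l \<Longrightarrow> Bl l \<subseteq> Bl k" for k l using decseqD by blast
  have D3: "lm m (x k) (x l) \<le> r i" if "i \<le> k" "k \<le> l" for i k l
  proof -
    have "x k \<in> Bl i" "x l \<in> Bl i" using inB dec that by (meson order.trans subsetD)+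
    then have "lm m (x i) (x k) \<le> r i" "lm m (x i) (x l) \<le> r i" unfolding Bl_def closed_ball_in_def by auto
    then show ?thesis using lm_ultra[OF xF[of k] xF[of i] xF[of l]] lm_sym[of m "x k" "x i"] by simp
  qed
  show "\<exists>y. \<forall>k. y \<in> closed_ball_in (Fm m) (lm m) (x k) (r k)"
  proof (cases "\<exists>i. r i = 0")
    case True
    then obtain i where i: "r i = 0" by blast
    have "x i \<in> Bl j" for j
    proof (cases "j \<le> i")
      case True then show ?thesis using inB dec by blast
    next
      case False
      then have "x j \<in> Bl i" using inB dec by (meson nle_le subsetD)
      then have "lm m (x i) (x j) \<le> 0" using i unfolding Bl_def closed_ball_in_def by simp
      then have "lm m (x i) (x j) = 0" using lm_nonneg[of m "x i" "x j"] by simp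
      then have "x i = x j" using lm_zero_iff xF by blast
      then show ?thesis using inB by simp
    qed
    then show ?thesis unfolding Bl_def by blast
  next
    case False
    then have rpos: "0 < r i" for i using r0 by (metis less_eq_real_def)
    define s where "s k = Min (r ` {..k})" for k
    have s_in: "s k \<in> r ` {..k}" for k unfolding s_def by (intro Min_in) auto
    have s_pos: "0 < s k" for k using s_in[of k] rpos by (metis imageE)
    have s_le: "i \<le> k \<Longrightarrow> s k \<le> r i" for i k unfolding s_def by (intro Min_le) auto
    have s_dec: "k \<le> k' \<Longrightarrow> s k' \<le> s k" for k k' unfolding s_def by (intro Min_antimono) auto
    have d_s: "lm m (x k) (x l) \<le> s k" if "k \<le> l" for k l
      using s_in[of k] D3 that by fastforce
    have ex: "\<exists>p q. vv p q \<le> 2 * s k" for k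
    proof -
      obtain n where n: "(1/2::real)^n < s k" using real_arch_pow_inv[OF s_pos[of k], of "1/2"] by auto
      then show ?thesis using vv_n0[of n] by (intro exI[of _ n] exI[of _ 0]) simp
    qed
    define P where "P k = (LEAST p. \<exists>q. vv p q \<le> 2 * s k)" for k
    define Q where "Q k = (LEAST q. vv (P k) q \<le> 2 * s k)" for k
    have P1: "\<exists>q. vv (P k) q \<le> 2 * s k" for k unfolding P_def using ex by (rule LeastI_ex)
    have PQ1: "vv (P k) (Q k) \<le> 2 * s k" for k unfolding Q_def using P1 by (rule LeastI_ex)
    have PQ2: "vv p q \<le> vv (P k) (Q k)" if "vv p q \<le> 2 * s k" for p q k
    proof -
      have "P k \<le> p" unfolding P_def using that by (intro Least_le) blast
      moreover have "P k = p \<Longrightarrow> Q k \<le> q" unfolding Q_def using that by (intro Least_le) simp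
      ultimately show ?thesis using vv_le_iff by (metis le_neq_implies_less)
    qed
    have PQ3: "sim_nk m (P k) (Q k) (x k) (x l)" if kl: "k \<le> l" for k l
    proof -
      obtain n k' where "sim_nk m n k' (x k) (x l)" "vv n k' \<le> 2 * s k"
        using lm_le_attain[OF xF[of k] xF[of l] s_pos[of k] d_s[OF kl]] by blast
      then show ?thesis using sim_nk_mono[OF xF xF] PQ2 by blast
    qed
    have PQ4: "vv (P k') (Q k') \<le> vv (P k) (Q k)" if "k \<le> k'" for k k'
      using PQ1[of k'] s_dec[OF that] PQ2[of "P k'" "Q k'" k] by simp
    define h where "h ps = sum_list (map loc_height ps)" for ps :: "tree list"
    define e where "e k hh = P k + (if hh < Q k then 1 else 0)" for k hh :: nat
    have E1: "e k hh \<le> e k' hh" if "k \<le> k'" for k k' hh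
    proof -
      have "P k < P k' \<or> (P k = P k' \<and> Q k \<le> Q k')" using PQ4[OF that] vv_le_iff by blast
      then show ?thesis unfolding e_def by auto
    qed
    have E2: "sim (e k (h ps)) (x k ps) (x l ps)" if "ps \<in> Tuples m" "k \<le> l" for ps k l
      using PQ3[OF that(2)] that(1) unfolding sim_nk_def e_def h_def by auto
    have E3: "sim_nk m (P k) (Q k) (x k) z"
      if zA: "\<forall>ps\<in>Tuples m. is_inf_proof (z ps) \<and> sim (e k (h ps)) (x k ps) (z ps)" for k z
      unfolding sim_nk_def
    proof (intro conjI ballI impI)
      fix ps assume ps: "ps \<in> Tuples m"
      have zz: "is_inf_proof (z ps) \<and> sim (e k (h ps)) (x k ps) (z ps)" using zA ps by blast
      have pr: "is_inf_proof (x k ps)" "is_inf_proof (z ps)" using Fm_proof[OF xF ps] zz by auto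
      have s: "sim (e k (h ps)) (x k ps) (z ps)" using zz by blast
      show "sim (P k) (x k ps) (z ps)" using sim_down[OF pr s] unfolding e_def by simp
      assume hq: "sum_list (map loc_height ps) < Q k"
      have "e k (h ps) = Suc (P k)" using hq unfolding e_def h_def by simp
      then show "sim (Suc (P k)) (x k ps) (z ps)" using s by simp
    qed
    define bnd where "bnd hh = (\<exists>E. \<forall>k. e k hh \<le> E)" for hh
    define K where "K hh = (LEAST K. \<forall>k\<ge>K. e k hh = e K hh)" for hh
    have KK: "\<forall>k\<ge>K hh. e k hh = e (K hh) hh" if bh: "bnd hh" for hh
    proof -
      obtain E where E: "\<And>k. e k hh \<le> E" using bh unfolding bnd_def by blast
      have "range (\<lambda>k. e k hh) \<subseteq> {..E}" using E by blast
      then have fin: "finite (range (\<lambda>k. e k hh))" using finite_subset by blast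
      obtain K0 where K0: "e K0 hh = Max (range (\<lambda>k. e k hh))"
        using Max_in[OF fin] by auto
      have "\<forall>k\<ge>K0. e k hh = e K0 hh"
        using K0 E1 Max_ge[OF fin] by (metis le_antisym rangeI)
      then show ?thesis unfolding K_def by (rule LeastI)
    qed
    define y where "y ps = (if ps \<in> Tuples m then (if bnd (h ps) then x (K (h ps)) ps
        else (SOME z. is_inf_proof z \<and> (\<forall>k. sim (e k (h ps)) (x k ps) z))) else undefined)" for ps
    have Y: "is_inf_proof (y ps) \<and> (\<forall>k. sim (e k (h ps)) (x k ps) (y ps))" if ps: "ps \<in> Tuples m" for ps
    proof (cases "bnd (h ps)")
      case True
      let ?K = "K (h ps)"
      have yk: "y ps = x ?K ps" unfolding y_def using ps True by simp
      have "sim (e k (h ps)) (x k ps) (x ?K ps)" for k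
      proof (cases "k \<le> ?K")
        case True then show ?thesis using E2 ps by blast
      next
        case False
        then have "sim (e ?K (h ps)) (x ?K ps) (x k ps)" using E2 ps by simp
        moreover have "e k (h ps) = e ?K (h ps)"
        proof -
          have "?K \<le> k" using False by simp
          then show ?thesis using KK[OF True] by blast
        qed
        ultimately show ?thesis using sim_sym by simp
      qed
      then show ?thesis using yk Fm_proof[OF xF ps] by simp
    next
      case False
      have C: "\<forall>n. \<exists>J. \<forall>j l. J \<le> j \<longrightarrow> j \<le> l \<longrightarrow> sim n (x j ps) (x l ps)"
      proof
        fix n
        obtain J where J: "n \<le> e J (h ps)" using False unfolding bnd_def by (meson nle_le)
        have "sim n (x j ps) (x l ps)" if "J \<le> j" "j \<le> l" for j l
        proof -
          have "n \<le> e j (h ps)" using J E1[OF that(1), of "h ps"] by linarith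
          then show ?thesis using sim_down[OF Fm_proof[OF xF ps] Fm_proof[OF xF ps] E2[OF ps that(2)]] by blast
        qed
        then show "\<exists>J. \<forall>j l. J \<le> j \<longrightarrow> j \<le> l \<longrightarrow> sim n (x j ps) (x l ps)" by blast
      qed
      obtain z where z: "is_inf_proof z" "\<forall>n. \<exists>J. \<forall>j\<ge>J. sim n (x j ps) z"
        using lim_exists[of "\<lambda>j. x j ps", OF Fm_proof[OF xF ps] C] by blast
      have "sim (e k (h ps)) (x k ps) z" for k
      proof -
        obtain J where J: "\<forall>j\<ge>J. sim (e k (h ps)) (x j ps) z" using z(2) by blast
        have "sim (e k (h ps)) (x k ps) (x (max J k) ps)" using E2[OF ps] by simp
        then show ?thesis using J sim_trans by (meson max.cobounded1)
      qed
      then have ex: "\<exists>z. is_inf_proof z \<and> (\<forall>k. sim (e k (h ps)) (x k ps) z)" using z(1) by blast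
      have "y ps = (SOME z. is_inf_proof z \<and> (\<forall>k. sim (e k (h ps)) (x k ps) z))"
        unfolding y_def using ps False by simp
      then show ?thesis using someI_ex[OF ex] by simp
    qed
    have yF: "y \<in> Fm m" unfolding Fm_def
    proof (intro CollectI conjI ballI allI impI)
      show "y \<in> extensional (Tuples m)" unfolding y_def extensional_def by simp
      show "y ps \<in> Proofs" if "ps \<in> Tuples m" for ps using Y[OF that] unfolding Proofs_def by simp
      fix ps qs n assume ps: "ps \<in> Tuples m" and qs: "qs \<in> Tuples m"
        and sn: "\<forall>i<m. sim n (ps ! i) (qs ! i)"
      show "sim n (y ps) (y qs)"
      proof (cases "n = 0")
        case True then show ?thesis by simp
      next
        case False
        then have hh: "h ps = h qs" using h_sim[OF ps qs sn] unfolding h_def by simp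
        show ?thesis
        proof (cases "bnd (h ps)")
          case True
          then have "y ps = x (K (h ps)) ps" "y qs = x (K (h ps)) qs" unfolding y_def using ps qs hh by auto
          then show ?thesis using Fm_ne[OF xF ps qs sn] by simp
        next
          case False
          then obtain k where k: "n \<le> e k (h ps)" unfolding bnd_def by (meson nle_le)
          have a1: "sim n (x k ps) (y ps)"
            using sim_down[OF Fm_proof[OF xF ps] conjunct1[OF Y[OF ps]] _ k] Y[OF ps] by blast
          have a2: "sim n (x k qs) (y qs)"
            using sim_down[OF Fm_proof[OF xF qs] conjunct1[OF Y[OF qs]] _ k] Y[OF qs] hh by auto
          have a3: "sim n (x k ps) (x k qs)" using Fm_ne[OF xF ps qs sn] .
          show ?thesis using a1 a2 a3 sim_sym sim_trans by metis
        qed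
      qed
    qed
    have "y \<in> closed_ball_in (Fm m) (lm m) (x j) (r j)" for j
    proof -
      have "sim_nk m (P j) (Q j) (x j) y" using Y by (intro E3) blast
      then have "lm m (x j) y \<le> vv (P j) (Q j) / 2" by (rule lm_upper)
      also have "\<dots> \<le> s j" using PQ1[of j] by simp
      also have "\<dots> \<le> r j" using s_le by simp
      finally show ?thesis unfolding closed_ball_in_def using yF by simp
    qed
    then show ?thesis by blast
  qed
qed


theorem proposition4p3:
  fixes m :: nat
  shows "ultrametric_space (Fm m) (lm m) \<and> spherically_complete (Fm m) (lm m)"
  using ultra_part sph by blast

end
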